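(* Let $(A,*,\circ)$ be a left skew brace and $I,J$ ideals of $A$. Then the Huq commutator $[I,J]$ is the ideal of $A$ generated by the union of the following three sets: (1) $\{\,i\circ j\circ(j\circ i)^{-\circ}\mid i\in I,\ j\in J\,\}$; (2) $\{\,i*j*(j*i)^{-*}\mid i\in I,\ j\in J\,\}$; (3) $\{\,(i\circ j)*(i*j)^{-*}\mid i\in I,\ j\in J\,\}$.
   Context: A (left) skew brace is a triple $(A,*,\circ)$ with $(A,* )$ and $(A,\circ)$ groups such that $a\circ(b*c)=(a\circ b)*a^{-*}*(a\circ c)$ for all $a,b,c\in A$; $a^{-*}$, $a^{-\circ}$ denote inverses in $(A,* )$, $(A,\circ)$; the groups share the identity. Morphisms are maps that are homomorphisms for both operations; products are componentwise. For $a,u\in A$, $\lambda_a(u)=a^{-*}*(a\circ u)$. An ideal of $A$ is a subset $I$ that is a normal subgroup of $(A,\circ)$, satisfies $I*a=a*I$ for all $a\in A$, and $\lambda_a(I)\subseteq I$ for all $a\in A$; ideals are sub-skew braces and for an ideal $K$ the cosets $a*K=a\circ K$ form the quotient skew brace $A/K$. The Huq commutator $[I,J]$ of ideals $I,J$ is the smallest ideal $K$ of $A$ such that the map $I\times J\to A/K$, $(i,j)\mapsto (i*j)*K$, is a skew brace morphism (equivalently, the kernel of the universal surjective morphism $\psi\colon A\to Q$ such that there is a skew brace morphism $\varphi\colon \psi(I)\times\psi(J)\to Q$ with $\varphi(x,1)=x$, $\varphi(1,y)=y$). *)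

theory Defs
  imports "HOL-Algebra.Algebra"
begin

text \<open>A skew brace is given by two HOL-Algebra monoid structures S (the additive
  group (A,*)) and C (the multiplicative group (A,o)) on the same carrier.\<close>

definition skew_brace :: "'a monoid \<Rightarrow> 'a monoid \<Rightarrow> bool" where
  "skew_brace S C \<longleftrightarrow> group S \<and> group C \<and> carrier C = carrier S \<and>
     (\<forall>a\<in>carrier S. \<forall>b\<in>carrier S. \<forall>c\<in>carrier S.
        a \<otimes>\<^bsub>C\<^esub> (b \<otimes>\<^bsub>S\<^esub> c) =
        (a \<otimes>\<^bsub>C\<^esub> b) \<otimes>\<^bsub>S\<^esub> inv\<^bsub>S\<^esub> a \<otimes>\<^bsub>S\<^esub> (a \<otimes>\<^bsub>C\<^esub> c))"

definition brace_lambda :: "'a monoid \<Rightarrow> 'a monoid \<Rightarrow> 'a \<Rightarrow> 'a \<Rightarrow> 'a" where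
  "brace_lambda S C a u = inv\<^bsub>S\<^esub> a \<otimes>\<^bsub>S\<^esub> (a \<otimes>\<^bsub>C\<^esub> u)"

definition brace_ideal :: "'a monoid \<Rightarrow> 'a monoid \<Rightarrow> 'a set \<Rightarrow> bool" where
  "brace_ideal S C I \<longleftrightarrow> I \<subseteq> carrier S \<and> I \<lhd> C \<and>
     (\<forall>a\<in>carrier S. I #>\<^bsub>S\<^esub> a = a <#\<^bsub>S\<^esub> I) \<and>
     (\<forall>a\<in>carrier S. brace_lambda S C a ` I \<subseteq> I)"

definition brace_hom :: "('a, 'm) monoid_scheme \<Rightarrow> ('a, 'm) monoid_scheme \<Rightarrow>
     ('b, 'n) monoid_scheme \<Rightarrow> ('b, 'n) monoid_scheme \<Rightarrow> ('a \<Rightarrow> 'b) set" where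
  "brace_hom S C S' C' = hom S S' \<inter> hom C C'"

text \<open>The condition in the definition of the Huq commutator: the map
  I x J -> A/K, (i,j) |-> (i*j)K, is a skew brace morphism from the product
  of the sub-skew braces I and J to the quotient skew brace A/K.
  (Cosets are written as right cosets K*a, equal to a*K for an ideal K.)\<close>
definition huq_condition :: "'a monoid \<Rightarrow> 'a monoid \<Rightarrow> 'a set \<Rightarrow> 'a set \<Rightarrow> 'a set \<Rightarrow> bool" where
  "huq_condition S C I J K \<longleftrightarrow>
     (\<lambda>(i, j). K #>\<^bsub>S\<^esub> (i \<otimes>\<^bsub>S\<^esub> j)) \<in>
       brace_hom (S\<lparr>carrier := I\<rparr> \<times>\<times> S\<lparr>carrier := J\<rparr>)
                 (C\<lparr>carrier := I\<rparr> \<times>\<times> C\<lparr>carrier := J\<rparr>)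
                 (S Mod K) (C Mod K)"

definition huq_commutator :: "'a monoid \<Rightarrow> 'a monoid \<Rightarrow> 'a set \<Rightarrow> 'a set \<Rightarrow> 'a set" where
  "huq_commutator S C I J = (THE K. brace_ideal S C K \<and> huq_condition S C I J K \<and>
      (\<forall>K'. brace_ideal S C K' \<and> huq_condition S C I J K' \<longrightarrow> K \<subseteq> K'))"

definition brace_ideal_generated :: "'a monoid \<Rightarrow> 'a monoid \<Rightarrow> 'a set \<Rightarrow> 'a set" where
  "brace_ideal_generated S C Y = Inter {L. brace_ideal S C L \<and> Y \<subseteq> L}"

end

theory Submission
  imports Defs
begin

lemma (in group) cancel_l1: "a \<in> carrier G \<Longrightarrow> z \<in> carrier G \<Longrightarrow> inv a \<otimes> (a \<otimes> z) = z"
  by (simp add: m_assoc[symmetric])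
lemma (in group) cancel_l2: "a \<in> carrier G \<Longrightarrow> z \<in> carrier G \<Longrightarrow> a \<otimes> (inv a \<otimes> z) = z"
  by (simp add: m_assoc[symmetric])

lemma (in group) rcos_eq_iff:
  assumes "subgroup H G" "x \<in> carrier G" "y \<in> carrier G"
  shows "(H #> x = H #> y) \<longleftrightarrow> x \<otimes> inv y \<in> H"
proof
  assume "H #> x = H #> y"
  then have "x \<in> H #> y" using rcos_self assms by metis
  then show "x \<otimes> inv y \<in> H" using subgroup.rcos_module_imp[OF assms(1) is_group] assms by blast
next
  assume "x \<otimes> inv y \<in> H"
  then have "x \<in> H #> y" using subgroup.rcos_module_rev[OF assms(1) is_group] assms by blast
  then show "H #> x = H #> y" using repr_independence assms by metis
qed

lemma (in group) normal_Inter: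
  assumes "F \<noteq> {}" "\<And>N. N \<in> F \<Longrightarrow> N \<lhd> G"
  shows "\<Inter>F \<lhd> G"
proof -
  have "subgroup (\<Inter>F) G" using subgroups_Inter assms normal_imp_subgroup by metis
  moreover have "\<forall>x \<in> carrier G. \<forall>h \<in> \<Inter>F. x \<otimes> h \<otimes> (inv x) \<in> \<Inter>F"
    using assms normal_inv_iff by blast
  ultimately show ?thesis using normal_inv_iff by blast
qed

locale sbr = S: group S + C: group C for S C :: "'a monoid" +
  assumes carr: "carrier C = carrier S"
  and comp: "\<And>a b c. a \<in> carrier S \<Longrightarrow> b \<in> carrier S \<Longrightarrow> c \<in> carrier S \<Longrightarrow>
     a \<otimes>\<^bsub>C\<^esub> (b \<otimes>\<^bsub>S\<^esub> c) =
        (a \<otimes>\<^bsub>C\<^esub> b) \<otimes>\<^bsub>S\<^esub> inv\<^bsub>S\<^esub> a \<otimes>\<^bsub>S\<^esub> (a \<otimes>\<^bsub>C\<^esub> c)"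
begin

lemma Cm_closed[simp]: "a \<in> carrier S \<Longrightarrow> b \<in> carrier S \<Longrightarrow> a \<otimes>\<^bsub>C\<^esub> b \<in> carrier S"
  using C.m_closed carr by auto
lemma Cinv_closed[simp]: "a \<in> carrier S \<Longrightarrow> inv\<^bsub>C\<^esub> a \<in> carrier S"
  using C.inv_closed carr by auto

lemma one_eq: "\<one>\<^bsub>C\<^esub> = \<one>\<^bsub>S\<^esub>"
proof -
  have c1: "\<one>\<^bsub>C\<^esub> \<in> carrier S" using carr by auto
  have "\<one>\<^bsub>C\<^esub> \<otimes>\<^bsub>C\<^esub> (\<one>\<^bsub>S\<^esub> \<otimes>\<^bsub>S\<^esub> \<one>\<^bsub>S\<^esub>) = (\<one>\<^bsub>C\<^esub> \<otimes>\<^bsub>C\<^esub> \<one>\<^bsub>S\<^esub>) \<otimes>\<^bsub>S\<^esub> inv\<^bsub>S\<^esub> \<one>\<^bsub>C\<^esub> \<otimes>\<^bsub>S\<^esub> (\<one>\<^bsub>C\<^esub> \<otimes>\<^bsub>C\<^esub> \<one>\<^bsub>S\<^esub>)"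
    using comp[OF c1 S.one_closed S.one_closed] .
  moreover have "\<one>\<^bsub>C\<^esub> \<otimes>\<^bsub>C\<^esub> \<one>\<^bsub>S\<^esub> = \<one>\<^bsub>S\<^esub>" using carr by auto
  ultimately have "\<one>\<^bsub>S\<^esub> = inv\<^bsub>S\<^esub> \<one>\<^bsub>C\<^esub>" using c1 by simp
  then have "inv\<^bsub>S\<^esub> \<one>\<^bsub>S\<^esub> = \<one>\<^bsub>C\<^esub>" using c1 by simp
  then show ?thesis by simp
qed

lemma C_one_closed[simp]: "\<one>\<^bsub>C\<^esub> \<in> carrier S" using carr by auto

lemma Cr_one[simp]: "a \<in> carrier S \<Longrightarrow> a \<otimes>\<^bsub>C\<^esub> \<one>\<^bsub>S\<^esub> = a"
  using one_eq carr C.r_one by metis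
lemma Cl_one[simp]: "a \<in> carrier S \<Longrightarrow> \<one>\<^bsub>S\<^esub> \<otimes>\<^bsub>C\<^esub> a = a"
  using one_eq carr C.l_one by metis

lemma comp_inv: assumes a: "a \<in> carrier S" and b: "b \<in> carrier S"
  shows "a \<otimes>\<^bsub>C\<^esub> inv\<^bsub>S\<^esub> b = a \<otimes>\<^bsub>S\<^esub> inv\<^bsub>S\<^esub> (a \<otimes>\<^bsub>C\<^esub> b) \<otimes>\<^bsub>S\<^esub> a"
proof -
  have "a \<otimes>\<^bsub>C\<^esub> (b \<otimes>\<^bsub>S\<^esub> inv\<^bsub>S\<^esub> b) = (a \<otimes>\<^bsub>C\<^esub> b) \<otimes>\<^bsub>S\<^esub> inv\<^bsub>S\<^esub> a \<otimes>\<^bsub>S\<^esub> (a \<otimes>\<^bsub>C\<^esub> inv\<^bsub>S\<^esub> b)"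
    using comp[OF a b S.inv_closed[OF b]] .
  then have e: "a = (a \<otimes>\<^bsub>C\<^esub> b) \<otimes>\<^bsub>S\<^esub> inv\<^bsub>S\<^esub> a \<otimes>\<^bsub>S\<^esub> (a \<otimes>\<^bsub>C\<^esub> inv\<^bsub>S\<^esub> b)"
    using a b by simp
  obtain xX where X_def: "xX = a \<otimes>\<^bsub>C\<^esub> b" by blast
  obtain yY where Y_def: "yY = a \<otimes>\<^bsub>C\<^esub> inv\<^bsub>S\<^esub> b" by blast
  have xX: "xX \<in> carrier S" and yY: "yY \<in> carrier S" using a b by (auto simp: X_def Y_def)
  have "a = xX \<otimes>\<^bsub>S\<^esub> (inv\<^bsub>S\<^esub> a \<otimes>\<^bsub>S\<^esub> yY)" using e a xX yY by (simp add: X_def Y_def S.m_assoc)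
  then have "inv\<^bsub>S\<^esub> xX \<otimes>\<^bsub>S\<^esub> a = inv\<^bsub>S\<^esub> xX \<otimes>\<^bsub>S\<^esub> (xX \<otimes>\<^bsub>S\<^esub> (inv\<^bsub>S\<^esub> a \<otimes>\<^bsub>S\<^esub> yY))" by (rule arg_cong)
  also have "\<dots> = inv\<^bsub>S\<^esub> a \<otimes>\<^bsub>S\<^esub> yY" using a xX yY by (simp add: S.cancel_l1)
  finally have "a \<otimes>\<^bsub>S\<^esub> (inv\<^bsub>S\<^esub> xX \<otimes>\<^bsub>S\<^esub> a) = a \<otimes>\<^bsub>S\<^esub> (inv\<^bsub>S\<^esub> a \<otimes>\<^bsub>S\<^esub> yY)" by simp
  then have "a \<otimes>\<^bsub>S\<^esub> (inv\<^bsub>S\<^esub> xX \<otimes>\<^bsub>S\<^esub> a) = yY" using a xX yY by (simp add: S.cancel_l2)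
  then show ?thesis using a xX yY by (simp add: X_def Y_def S.m_assoc)
qed

abbreviation lam where "lam \<equiv> brace_lambda S C"

lemma lam_closed[simp]: "a \<in> carrier S \<Longrightarrow> u \<in> carrier S \<Longrightarrow> lam a u \<in> carrier S"
  by (simp add: brace_lambda_def)

lemma lam_one[simp]: "u \<in> carrier S \<Longrightarrow> lam \<one>\<^bsub>S\<^esub> u = u"
  by (simp add: brace_lambda_def)

lemma lam_mult: "a \<in> carrier S \<Longrightarrow> u \<in> carrier S \<Longrightarrow> a \<otimes>\<^bsub>S\<^esub> lam a u = a \<otimes>\<^bsub>C\<^esub> u"
  by (simp add: brace_lambda_def S.cancel_l2)

lemma lam_comp: assumes a: "a \<in> carrier S" and b: "b \<in> carrier S" and u: "u \<in> carrier S"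
  shows "lam a (lam b u) = lam (a \<otimes>\<^bsub>C\<^esub> b) u"
proof -
  have "lam a (lam b u) = inv\<^bsub>S\<^esub> a \<otimes>\<^bsub>S\<^esub> ((a \<otimes>\<^bsub>C\<^esub> inv\<^bsub>S\<^esub> b) \<otimes>\<^bsub>S\<^esub> inv\<^bsub>S\<^esub> a \<otimes>\<^bsub>S\<^esub> (a \<otimes>\<^bsub>C\<^esub> (b \<otimes>\<^bsub>C\<^esub> u)))"
    unfolding brace_lambda_def using a b u comp by simp
  also have "\<dots> = inv\<^bsub>S\<^esub> (a \<otimes>\<^bsub>C\<^esub> b) \<otimes>\<^bsub>S\<^esub> ((a \<otimes>\<^bsub>C\<^esub> b) \<otimes>\<^bsub>C\<^esub> u)"
    using a b u by (simp add: comp_inv S.m_assoc S.cancel_l1 C.m_assoc carr)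
  finally show ?thesis by (simp add: brace_lambda_def)
qed


abbreviation ideal where "ideal K \<equiv> brace_ideal S C K"

lemma lam_inv: "a \<in> carrier S \<Longrightarrow> lam a (inv\<^bsub>C\<^esub> a) = inv\<^bsub>S\<^esub> a"
  using carr by (simp add: brace_lambda_def one_eq)

lemma ideal_subgroup: assumes K: "ideal K" shows "subgroup K S"
proof (rule S.subgroupI)
  have sub: "K \<subseteq> carrier S" and nC: "K \<lhd> C" and lK: "\<forall>a\<in>carrier S. lam a ` K \<subseteq> K"
    using K by (auto simp: brace_ideal_def)
  have sgC: "subgroup K C" using nC normal_imp_subgroup by blast
  show "K \<subseteq> carrier S" by fact
  show "K \<noteq> {}" using subgroup.one_closed[OF sgC] by blast
  fix a assume a: "a \<in> K"
  then have ac: "a \<in> carrier S" using sub by blast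
  have "inv\<^bsub>C\<^esub> a \<in> K" using subgroup.m_inv_closed[OF sgC a] .
  then have "lam a (inv\<^bsub>C\<^esub> a) \<in> K" using lK ac by blast
  then show "inv\<^bsub>S\<^esub> a \<in> K" using lam_inv ac by simp
  fix b assume b: "b \<in> K"
  then have bc: "b \<in> carrier S" using sub by blast
  have l1: "lam (inv\<^bsub>C\<^esub> a) b \<in> K" using lK Cinv_closed[OF ac] b by blast
  have "a \<otimes>\<^bsub>S\<^esub> lam a (lam (inv\<^bsub>C\<^esub> a) b) = a \<otimes>\<^bsub>C\<^esub> lam (inv\<^bsub>C\<^esub> a) b"
    using lam_mult ac bc by simp
  moreover have "lam a (lam (inv\<^bsub>C\<^esub> a) b) = b"
    using lam_comp ac bc carr by (simp add: one_eq)
  ultimately have "a \<otimes>\<^bsub>S\<^esub> b = a \<otimes>\<^bsub>C\<^esub> lam (inv\<^bsub>C\<^esub> a) b" by simp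
  moreover have "a \<otimes>\<^bsub>C\<^esub> lam (inv\<^bsub>C\<^esub> a) b \<in> K" using subgroup.m_closed[OF sgC a l1] .
  ultimately show "a \<otimes>\<^bsub>S\<^esub> b \<in> K" by simp
qed

lemma ideal_normal: assumes K: "ideal K" shows "K \<lhd> S"
  using S.normalI[OF ideal_subgroup[OF K]] K by (auto simp: brace_ideal_def)

lemma ideal_iff: "ideal K \<longleftrightarrow> K \<subseteq> carrier S \<and> K \<lhd> C \<and> K \<lhd> S \<and> (\<forall>a\<in>carrier S. \<forall>u\<in>K. lam a u \<in> K)"
  using ideal_normal normal.coset_eq unfolding brace_ideal_def by fastforce

lemma ideal_Inter: assumes "F \<noteq> {}" "\<And>K. K \<in> F \<Longrightarrow> ideal K" shows "ideal (\<Inter>F)"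
proof -
  have "\<Inter>F \<lhd> C" using C.normal_Inter assms ideal_iff by metis
  moreover have "\<Inter>F \<lhd> S" using S.normal_Inter assms ideal_iff by metis
  moreover have "\<Inter>F \<subseteq> carrier S" using assms ideal_iff by blast
  moreover have "\<forall>a\<in>carrier S. \<forall>u\<in>\<Inter>F. lam a u \<in> \<Inter>F" using assms ideal_iff by blast
  ultimately show ?thesis using ideal_iff by blast
qed

lemma ideal_carrier: "ideal (carrier S)"
proof -
  have "carrier S \<lhd> S" using S.normal_inv_iff S.subgroup_self by auto
  moreover have "carrier S \<lhd> C" using C.normal_inv_iff C.subgroup_self carr by auto
  ultimately show ?thesis using ideal_iff by auto
qed

lemma lcos_eq: assumes K: "ideal K" and x: "x \<in> carrier S"
  shows "x <#\<^bsub>S\<^esub> K = x <#\<^bsub>C\<^esub> K"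
proof
  have sub: "K \<subseteq> carrier S" and lK: "\<forall>a\<in>carrier S. \<forall>u\<in>K. lam a u \<in> K"
    using K ideal_iff by auto
  show "x <#\<^bsub>C\<^esub> K \<subseteq> x <#\<^bsub>S\<^esub> K"
  proof
    fix y assume "y \<in> x <#\<^bsub>C\<^esub> K"
    then obtain k where k: "k \<in> K" "y = x \<otimes>\<^bsub>C\<^esub> k" by (auto simp: l_coset_def)
    then have "y = x \<otimes>\<^bsub>S\<^esub> lam x k" using lam_mult x sub by auto
    then show "y \<in> x <#\<^bsub>S\<^esub> K" using lK x k by (auto simp: l_coset_def)
  qed
  show "x <#\<^bsub>S\<^esub> K \<subseteq> x <#\<^bsub>C\<^esub> K"
  proof
    fix y assume "y \<in> x <#\<^bsub>S\<^esub> K"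
    then obtain k where k: "k \<in> K" "y = x \<otimes>\<^bsub>S\<^esub> k" by (auto simp: l_coset_def)
    have kc: "k \<in> carrier S" using k sub by auto
    have "lam x (lam (inv\<^bsub>C\<^esub> x) k) = k"
      using lam_comp x kc carr by (simp add: one_eq)
    then have "y = x \<otimes>\<^bsub>C\<^esub> lam (inv\<^bsub>C\<^esub> x) k" using lam_mult[of x "lam (inv\<^bsub>C\<^esub> x) k"] x kc k by simp
    moreover have "lam (inv\<^bsub>C\<^esub> x) k \<in> K" using lK x k by simp
    ultimately show "y \<in> x <#\<^bsub>C\<^esub> K" by (auto simp: l_coset_def)
  qed
qed

lemma cos_eq: assumes K: "ideal K" and x: "x \<in> carrier S"
  shows "K #>\<^bsub>S\<^esub> x = K #>\<^bsub>C\<^esub> x"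
proof -
  have "K #>\<^bsub>S\<^esub> x = x <#\<^bsub>S\<^esub> K" using K x by (auto simp: brace_ideal_def)
  also have "\<dots> = x <#\<^bsub>C\<^esub> K" using lcos_eq K x by blast
  also have "\<dots> = K #>\<^bsub>C\<^esub> x" using K x normal.coset_eq[of K C] carr by (auto simp: brace_ideal_def)
  finally show ?thesis .
qed



lemma rsumS: assumes K: "ideal K" and x: "x \<in> carrier S" and y: "y \<in> carrier S"
  shows "(K #>\<^bsub>S\<^esub> x) <#>\<^bsub>S\<^esub> (K #>\<^bsub>S\<^esub> y) = K #>\<^bsub>S\<^esub> (x \<otimes>\<^bsub>S\<^esub> y)"
  using normal.rcos_sum[OF ideal_normal[OF K] x y] .

lemma rsumC: assumes K: "ideal K" and x: "x \<in> carrier S" and y: "y \<in> carrier S"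
  shows "(K #>\<^bsub>S\<^esub> x) <#>\<^bsub>C\<^esub> (K #>\<^bsub>S\<^esub> y) = K #>\<^bsub>S\<^esub> (x \<otimes>\<^bsub>C\<^esub> y)"
proof -
  have n: "K \<lhd> C" using K by (auto simp: brace_ideal_def)
  have "(K #>\<^bsub>C\<^esub> x) <#>\<^bsub>C\<^esub> (K #>\<^bsub>C\<^esub> y) = K #>\<^bsub>C\<^esub> (x \<otimes>\<^bsub>C\<^esub> y)"
    using normal.rcos_sum[OF n] x y carr by auto
  then show ?thesis using cos_eq[OF K] x y by simp
qed

lemma cS: assumes K: "ideal K" and c: "x \<in> carrier S" "y \<in> carrier S" "x' \<in> carrier S" "y' \<in> carrier S"
  and e: "K #>\<^bsub>S\<^esub> x = K #>\<^bsub>S\<^esub> x'" "K #>\<^bsub>S\<^esub> y = K #>\<^bsub>S\<^esub> y'"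
  shows "K #>\<^bsub>S\<^esub> (x \<otimes>\<^bsub>S\<^esub> y) = K #>\<^bsub>S\<^esub> (x' \<otimes>\<^bsub>S\<^esub> y')"
  using rsumS[OF K] c e by metis

lemma cC: assumes K: "ideal K" and c: "x \<in> carrier S" "y \<in> carrier S" "x' \<in> carrier S" "y' \<in> carrier S"
  and e: "K #>\<^bsub>S\<^esub> x = K #>\<^bsub>S\<^esub> x'" "K #>\<^bsub>S\<^esub> y = K #>\<^bsub>S\<^esub> y'"
  shows "K #>\<^bsub>S\<^esub> (x \<otimes>\<^bsub>C\<^esub> y) = K #>\<^bsub>S\<^esub> (x' \<otimes>\<^bsub>C\<^esub> y')"
  using rsumC[OF K] c e by metis

lemma memY1: assumes K: "ideal K" and c: "i \<in> carrier S" "j \<in> carrier S"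
  shows "i \<otimes>\<^bsub>C\<^esub> j \<otimes>\<^bsub>C\<^esub> inv\<^bsub>C\<^esub> (j \<otimes>\<^bsub>C\<^esub> i) \<in> K \<longleftrightarrow>
     K #>\<^bsub>S\<^esub> (i \<otimes>\<^bsub>C\<^esub> j) = K #>\<^bsub>S\<^esub> (j \<otimes>\<^bsub>C\<^esub> i)"
proof -
  have n: "subgroup K C" using K normal_imp_subgroup by (auto simp: brace_ideal_def)
  show ?thesis using C.rcos_eq_iff[OF n, of "i \<otimes>\<^bsub>C\<^esub> j" "j \<otimes>\<^bsub>C\<^esub> i"] c carr cos_eq[OF K] by simp
qed

lemma memY2: assumes K: "ideal K" and c: "i \<in> carrier S" "j \<in> carrier S"
  shows "i \<otimes>\<^bsub>S\<^esub> j \<otimes>\<^bsub>S\<^esub> inv\<^bsub>S\<^esub> (j \<otimes>\<^bsub>S\<^esub> i) \<in> K \<longleftrightarrow>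
     K #>\<^bsub>S\<^esub> (i \<otimes>\<^bsub>S\<^esub> j) = K #>\<^bsub>S\<^esub> (j \<otimes>\<^bsub>S\<^esub> i)"
  using S.rcos_eq_iff[OF ideal_subgroup[OF K], of "i \<otimes>\<^bsub>S\<^esub> j" "j \<otimes>\<^bsub>S\<^esub> i"] c by simp

lemma memY3: assumes K: "ideal K" and c: "i \<in> carrier S" "j \<in> carrier S"
  shows "(i \<otimes>\<^bsub>C\<^esub> j) \<otimes>\<^bsub>S\<^esub> inv\<^bsub>S\<^esub> (i \<otimes>\<^bsub>S\<^esub> j) \<in> K \<longleftrightarrow>
     K #>\<^bsub>S\<^esub> (i \<otimes>\<^bsub>C\<^esub> j) = K #>\<^bsub>S\<^esub> (i \<otimes>\<^bsub>S\<^esub> j)"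
  using S.rcos_eq_iff[OF ideal_subgroup[OF K], of "i \<otimes>\<^bsub>C\<^esub> j" "i \<otimes>\<^bsub>S\<^esub> j"] c by simp

lemma huq_unfold: assumes K: "ideal K" and I: "I \<subseteq> carrier S" and J: "J \<subseteq> carrier S"
  shows "huq_condition S C I J K \<longleftrightarrow>
    (\<forall>i\<in>I. \<forall>j\<in>J. \<forall>i'\<in>I. \<forall>j'\<in>J.
       K #>\<^bsub>S\<^esub> (i \<otimes>\<^bsub>S\<^esub> i' \<otimes>\<^bsub>S\<^esub> (j \<otimes>\<^bsub>S\<^esub> j')) = K #>\<^bsub>S\<^esub> (i \<otimes>\<^bsub>S\<^esub> j \<otimes>\<^bsub>S\<^esub> (i' \<otimes>\<^bsub>S\<^esub> j')) \<and>
       K #>\<^bsub>S\<^esub> ((i \<otimes>\<^bsub>C\<^esub> i') \<otimes>\<^bsub>S\<^esub> (j \<otimes>\<^bsub>C\<^esub> j')) = K #>\<^bsub>S\<^esub> ((i \<otimes>\<^bsub>S\<^esub> j) \<otimes>\<^bsub>C\<^esub> (i' \<otimes>\<^bsub>S\<^esub> j')))"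
proof -
  have Ks: "K \<subseteq> carrier S" using K by (auto simp: brace_ideal_def)
  have pi1: "(\<lambda>(i, j). K #>\<^bsub>S\<^esub> (i \<otimes>\<^bsub>S\<^esub> j)) \<in> carrier (S\<lparr>carrier := I\<rparr> \<times>\<times> S\<lparr>carrier := J\<rparr>) \<rightarrow> carrier (S Mod K)"
    using I J Ks apply (auto simp: DirProd_def FactGroup_def RCOSETS_def)
    using S.m_closed by blast
  have pi2: "(\<lambda>(i, j). K #>\<^bsub>S\<^esub> (i \<otimes>\<^bsub>S\<^esub> j)) \<in> carrier (C\<lparr>carrier := I\<rparr> \<times>\<times> C\<lparr>carrier := J\<rparr>) \<rightarrow> carrier (C Mod K)"
  proof
    fix x assume "x \<in> carrier (C\<lparr>carrier := I\<rparr> \<times>\<times> C\<lparr>carrier := J\<rparr>)"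
    then obtain i j where x: "x = (i, j)" "i \<in> I" "j \<in> J" by (auto simp: DirProd_def)
    then have "i \<otimes>\<^bsub>S\<^esub> j \<in> carrier C" using I J carr by auto
    moreover have "K #>\<^bsub>S\<^esub> (i \<otimes>\<^bsub>S\<^esub> j) = K #>\<^bsub>C\<^esub> (i \<otimes>\<^bsub>S\<^esub> j)" using cos_eq[OF K, of "i \<otimes>\<^bsub>S\<^esub> j"] x I J by blast
    ultimately show "(\<lambda>(i, j). K #>\<^bsub>S\<^esub> (i \<otimes>\<^bsub>S\<^esub> j)) x \<in> carrier (C Mod K)"
      using x by (auto simp: FactGroup_def RCOSETS_def)
  qed
  show ?thesis
    unfolding huq_condition_def brace_hom_def hom_def using pi1 pi2 I J
    by (auto simp: DirProd_def FactGroup_def rsumS[OF K] rsumC[OF K] subset_iff)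
qed




lemma ideal_props: assumes I: "ideal I"
  shows "I \<subseteq> carrier S" "\<one>\<^bsub>S\<^esub> \<in> I"
    "\<And>a b. a \<in> I \<Longrightarrow> b \<in> I \<Longrightarrow> a \<otimes>\<^bsub>C\<^esub> b \<in> I"
proof -
  show "I \<subseteq> carrier S" using I by (simp add: brace_ideal_def)
  show "\<one>\<^bsub>S\<^esub> \<in> I" by (rule subgroup.one_closed[OF ideal_subgroup[OF I]])
  have "I \<lhd> C" using I by (simp add: brace_ideal_def)
  then have sg: "subgroup I C" by (rule normal_imp_subgroup)
  fix a b assume "a \<in> I" "b \<in> I"
  then show "a \<otimes>\<^bsub>C\<^esub> b \<in> I" by (rule subgroup.m_closed[OF sg])
qed

lemma huq_iff: assumes K: "ideal K" and I: "ideal I" and J: "ideal J"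
  shows "huq_condition S C I J K \<longleftrightarrow>
      ({i \<otimes>\<^bsub>C\<^esub> j \<otimes>\<^bsub>C\<^esub> inv\<^bsub>C\<^esub> (j \<otimes>\<^bsub>C\<^esub> i) | i j. i \<in> I \<and> j \<in> J} \<union>
       {i \<otimes>\<^bsub>S\<^esub> j \<otimes>\<^bsub>S\<^esub> inv\<^bsub>S\<^esub> (j \<otimes>\<^bsub>S\<^esub> i) | i j. i \<in> I \<and> j \<in> J} \<union>
       {(i \<otimes>\<^bsub>C\<^esub> j) \<otimes>\<^bsub>S\<^esub> inv\<^bsub>S\<^esub> (i \<otimes>\<^bsub>S\<^esub> j) | i j. i \<in> I \<and> j \<in> J}) \<subseteq> K"
    (is "?H \<longleftrightarrow> ?Y \<subseteq> K")
proof -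
  note Ip = ideal_props[OF I] and Jp = ideal_props[OF J]
  have Ic: "\<And>x. x \<in> I \<Longrightarrow> x \<in> carrier S" using Ip by blast
  have Jc: "\<And>x. x \<in> J \<Longrightarrow> x \<in> carrier S" using Jp by blast
  have Yiff: "?Y \<subseteq> K \<longleftrightarrow> (\<forall>i\<in>I. \<forall>j\<in>J.
      K #>\<^bsub>S\<^esub> (i \<otimes>\<^bsub>C\<^esub> j) = K #>\<^bsub>S\<^esub> (j \<otimes>\<^bsub>C\<^esub> i) \<and>
      K #>\<^bsub>S\<^esub> (i \<otimes>\<^bsub>S\<^esub> j) = K #>\<^bsub>S\<^esub> (j \<otimes>\<^bsub>S\<^esub> i) \<and>
      K #>\<^bsub>S\<^esub> (i \<otimes>\<^bsub>C\<^esub> j) = K #>\<^bsub>S\<^esub> (i \<otimes>\<^bsub>S\<^esub> j))"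
  proof
    assume YK: "?Y \<subseteq> K"
    show "\<forall>i\<in>I. \<forall>j\<in>J.
      K #>\<^bsub>S\<^esub> (i \<otimes>\<^bsub>C\<^esub> j) = K #>\<^bsub>S\<^esub> (j \<otimes>\<^bsub>C\<^esub> i) \<and>
      K #>\<^bsub>S\<^esub> (i \<otimes>\<^bsub>S\<^esub> j) = K #>\<^bsub>S\<^esub> (j \<otimes>\<^bsub>S\<^esub> i) \<and>
      K #>\<^bsub>S\<^esub> (i \<otimes>\<^bsub>C\<^esub> j) = K #>\<^bsub>S\<^esub> (i \<otimes>\<^bsub>S\<^esub> j)"
    proof (intro ballI)
      fix i j assume i: "i \<in> I" and j: "j \<in> J"
      have "i \<otimes>\<^bsub>C\<^esub> j \<otimes>\<^bsub>C\<^esub> inv\<^bsub>C\<^esub> (j \<otimes>\<^bsub>C\<^esub> i) \<in> ?Y" using i j by blast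
      moreover have "i \<otimes>\<^bsub>S\<^esub> j \<otimes>\<^bsub>S\<^esub> inv\<^bsub>S\<^esub> (j \<otimes>\<^bsub>S\<^esub> i) \<in> ?Y" using i j by blast
      moreover have "(i \<otimes>\<^bsub>C\<^esub> j) \<otimes>\<^bsub>S\<^esub> inv\<^bsub>S\<^esub> (i \<otimes>\<^bsub>S\<^esub> j) \<in> ?Y" using i j by blast
      ultimately show "K #>\<^bsub>S\<^esub> (i \<otimes>\<^bsub>C\<^esub> j) = K #>\<^bsub>S\<^esub> (j \<otimes>\<^bsub>C\<^esub> i) \<and>
      K #>\<^bsub>S\<^esub> (i \<otimes>\<^bsub>S\<^esub> j) = K #>\<^bsub>S\<^esub> (j \<otimes>\<^bsub>S\<^esub> i) \<and>
      K #>\<^bsub>S\<^esub> (i \<otimes>\<^bsub>C\<^esub> j) = K #>\<^bsub>S\<^esub> (i \<otimes>\<^bsub>S\<^esub> j)"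
        using YK memY1[OF K Ic[OF i] Jc[OF j]] memY2[OF K Ic[OF i] Jc[OF j]] memY3[OF K Ic[OF i] Jc[OF j]]
        by (meson subsetD)
    qed
  next
    assume A: "\<forall>i\<in>I. \<forall>j\<in>J.
      K #>\<^bsub>S\<^esub> (i \<otimes>\<^bsub>C\<^esub> j) = K #>\<^bsub>S\<^esub> (j \<otimes>\<^bsub>C\<^esub> i) \<and>
      K #>\<^bsub>S\<^esub> (i \<otimes>\<^bsub>S\<^esub> j) = K #>\<^bsub>S\<^esub> (j \<otimes>\<^bsub>S\<^esub> i) \<and>
      K #>\<^bsub>S\<^esub> (i \<otimes>\<^bsub>C\<^esub> j) = K #>\<^bsub>S\<^esub> (i \<otimes>\<^bsub>S\<^esub> j)"
    show "?Y \<subseteq> K"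
    proof
      fix x assume "x \<in> ?Y"
      then obtain i j where i: "i \<in> I" and j: "j \<in> J" and
        x: "x = i \<otimes>\<^bsub>C\<^esub> j \<otimes>\<^bsub>C\<^esub> inv\<^bsub>C\<^esub> (j \<otimes>\<^bsub>C\<^esub> i) \<or> x = i \<otimes>\<^bsub>S\<^esub> j \<otimes>\<^bsub>S\<^esub> inv\<^bsub>S\<^esub> (j \<otimes>\<^bsub>S\<^esub> i) \<or>
            x = (i \<otimes>\<^bsub>C\<^esub> j) \<otimes>\<^bsub>S\<^esub> inv\<^bsub>S\<^esub> (i \<otimes>\<^bsub>S\<^esub> j)" by blast
      have a: "K #>\<^bsub>S\<^esub> (i \<otimes>\<^bsub>C\<^esub> j) = K #>\<^bsub>S\<^esub> (j \<otimes>\<^bsub>C\<^esub> i)"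
           "K #>\<^bsub>S\<^esub> (i \<otimes>\<^bsub>S\<^esub> j) = K #>\<^bsub>S\<^esub> (j \<otimes>\<^bsub>S\<^esub> i)"
           "K #>\<^bsub>S\<^esub> (i \<otimes>\<^bsub>C\<^esub> j) = K #>\<^bsub>S\<^esub> (i \<otimes>\<^bsub>S\<^esub> j)" using A i j by blast+
      show "x \<in> K"
        using x a memY1[OF K Ic[OF i] Jc[OF j]] memY2[OF K Ic[OF i] Jc[OF j]] memY3[OF K Ic[OF i] Jc[OF j]]
        by metis
    qed
  qed
  note U = huq_unfold[OF K Ip(1) Jp(1)]
  show ?thesis
  proof
    assume H: ?H
    note H' = U[THEN iffD1, OF H]
    have "\<forall>i\<in>I. \<forall>j\<in>J.
      K #>\<^bsub>S\<^esub> (i \<otimes>\<^bsub>C\<^esub> j) = K #>\<^bsub>S\<^esub> (j \<otimes>\<^bsub>C\<^esub> i) \<and>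
      K #>\<^bsub>S\<^esub> (i \<otimes>\<^bsub>S\<^esub> j) = K #>\<^bsub>S\<^esub> (j \<otimes>\<^bsub>S\<^esub> i) \<and>
      K #>\<^bsub>S\<^esub> (i \<otimes>\<^bsub>C\<^esub> j) = K #>\<^bsub>S\<^esub> (i \<otimes>\<^bsub>S\<^esub> j)"
    proof (intro ballI)
      fix i j assume i: "i \<in> I" and j: "j \<in> J"
      have ic: "i \<in> carrier S" and jc: "j \<in> carrier S" using Ic Jc i j by auto
      have e1: "K #>\<^bsub>S\<^esub> (\<one>\<^bsub>S\<^esub> \<otimes>\<^bsub>S\<^esub> i \<otimes>\<^bsub>S\<^esub> (j \<otimes>\<^bsub>S\<^esub> \<one>\<^bsub>S\<^esub>)) = K #>\<^bsub>S\<^esub> (\<one>\<^bsub>S\<^esub> \<otimes>\<^bsub>S\<^esub> j \<otimes>\<^bsub>S\<^esub> (i \<otimes>\<^bsub>S\<^esub> \<one>\<^bsub>S\<^esub>)) \<and>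
         K #>\<^bsub>S\<^esub> ((\<one>\<^bsub>S\<^esub> \<otimes>\<^bsub>C\<^esub> i) \<otimes>\<^bsub>S\<^esub> (j \<otimes>\<^bsub>C\<^esub> \<one>\<^bsub>S\<^esub>)) = K #>\<^bsub>S\<^esub> ((\<one>\<^bsub>S\<^esub> \<otimes>\<^bsub>S\<^esub> j) \<otimes>\<^bsub>C\<^esub> (i \<otimes>\<^bsub>S\<^esub> \<one>\<^bsub>S\<^esub>))"
        using H'[rule_format, OF Ip(2) j i Jp(2)] .
      have e2: "K #>\<^bsub>S\<^esub> ((i \<otimes>\<^bsub>C\<^esub> \<one>\<^bsub>S\<^esub>) \<otimes>\<^bsub>S\<^esub> (\<one>\<^bsub>S\<^esub> \<otimes>\<^bsub>C\<^esub> j)) = K #>\<^bsub>S\<^esub> ((i \<otimes>\<^bsub>S\<^esub> \<one>\<^bsub>S\<^esub>) \<otimes>\<^bsub>C\<^esub> (\<one>\<^bsub>S\<^esub> \<otimes>\<^bsub>S\<^esub> j))"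
        using H'[rule_format, OF i Jp(2) Ip(2) j] by blast
      show "K #>\<^bsub>S\<^esub> (i \<otimes>\<^bsub>C\<^esub> j) = K #>\<^bsub>S\<^esub> (j \<otimes>\<^bsub>C\<^esub> i) \<and>
      K #>\<^bsub>S\<^esub> (i \<otimes>\<^bsub>S\<^esub> j) = K #>\<^bsub>S\<^esub> (j \<otimes>\<^bsub>S\<^esub> i) \<and>
      K #>\<^bsub>S\<^esub> (i \<otimes>\<^bsub>C\<^esub> j) = K #>\<^bsub>S\<^esub> (i \<otimes>\<^bsub>S\<^esub> j)"
      proof -
        have f12: "K #>\<^bsub>S\<^esub> (i \<otimes>\<^bsub>S\<^esub> j) = K #>\<^bsub>S\<^esub> (j \<otimes>\<^bsub>S\<^esub> i) \<and> K #>\<^bsub>S\<^esub> (i \<otimes>\<^bsub>S\<^esub> j) = K #>\<^bsub>S\<^esub> (j \<otimes>\<^bsub>C\<^esub> i)"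
          using e1[unfolded S.l_one[OF ic] S.r_one[OF ic] S.l_one[OF jc] S.r_one[OF jc] Cl_one[OF ic] Cr_one[OF jc]] .
        have f3: "K #>\<^bsub>S\<^esub> (i \<otimes>\<^bsub>S\<^esub> j) = K #>\<^bsub>S\<^esub> (i \<otimes>\<^bsub>C\<^esub> j)"
          using e2[unfolded S.l_one[OF jc] S.r_one[OF ic] Cl_one[OF jc] Cr_one[OF ic]] .
        show ?thesis using f12 f3 by metis
      qed
    qed
    then show "?Y \<subseteq> K" by (rule Yiff[THEN iffD2])
  next
    assume "?Y \<subseteq> K"
    then have Y: "\<And>i j. i \<in> I \<Longrightarrow> j \<in> J \<Longrightarrow>
      K #>\<^bsub>S\<^esub> (i \<otimes>\<^bsub>C\<^esub> j) = K #>\<^bsub>S\<^esub> (j \<otimes>\<^bsub>C\<^esub> i) \<and>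
      K #>\<^bsub>S\<^esub> (i \<otimes>\<^bsub>S\<^esub> j) = K #>\<^bsub>S\<^esub> (j \<otimes>\<^bsub>S\<^esub> i) \<and>
      K #>\<^bsub>S\<^esub> (i \<otimes>\<^bsub>C\<^esub> j) = K #>\<^bsub>S\<^esub> (i \<otimes>\<^bsub>S\<^esub> j)" using Yiff[THEN iffD1] by blast
    show ?H unfolding U
    proof (intro ballI conjI)
      fix i j i' j' assume i: "i \<in> I" and j: "j \<in> J" and i': "i' \<in> I" and j': "j' \<in> J"
      have ic: "i \<in> carrier S" and jc: "j \<in> carrier S" and i'c: "i' \<in> carrier S" and j'c: "j' \<in> carrier S"
        using Ic Jc i j i' j' by auto
      have y2: "K #>\<^bsub>S\<^esub> (i' \<otimes>\<^bsub>S\<^esub> j) = K #>\<^bsub>S\<^esub> (j \<otimes>\<^bsub>S\<^esub> i')" using Y[OF i' j] by blast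
      have inner: "K #>\<^bsub>S\<^esub> ((i' \<otimes>\<^bsub>S\<^esub> j) \<otimes>\<^bsub>S\<^esub> j') = K #>\<^bsub>S\<^esub> ((j \<otimes>\<^bsub>S\<^esub> i') \<otimes>\<^bsub>S\<^esub> j')"
        by (rule cS[OF K S.m_closed[OF i'c jc] j'c S.m_closed[OF jc i'c] j'c y2 refl])
      have outer: "K #>\<^bsub>S\<^esub> (i \<otimes>\<^bsub>S\<^esub> ((i' \<otimes>\<^bsub>S\<^esub> j) \<otimes>\<^bsub>S\<^esub> j')) = K #>\<^bsub>S\<^esub> (i \<otimes>\<^bsub>S\<^esub> ((j \<otimes>\<^bsub>S\<^esub> i') \<otimes>\<^bsub>S\<^esub> j'))"
        by (rule cS[OF K ic S.m_closed[OF S.m_closed[OF i'c jc] j'c] ic S.m_closed[OF S.m_closed[OF jc i'c] j'c] refl inner])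
      show "K #>\<^bsub>S\<^esub> (i \<otimes>\<^bsub>S\<^esub> i' \<otimes>\<^bsub>S\<^esub> (j \<otimes>\<^bsub>S\<^esub> j')) = K #>\<^bsub>S\<^esub> (i \<otimes>\<^bsub>S\<^esub> j \<otimes>\<^bsub>S\<^esub> (i' \<otimes>\<^bsub>S\<^esub> j'))"
        using outer ic jc i'c j'c by (simp add: S.m_assoc)
      have ii: "i \<otimes>\<^bsub>C\<^esub> i' \<in> I" using Ip(3) i i' by blast
      have jj: "j \<otimes>\<^bsub>C\<^esub> j' \<in> J" using Jp(3) j j' by blast
      have y3: "K #>\<^bsub>S\<^esub> ((i \<otimes>\<^bsub>C\<^esub> i') \<otimes>\<^bsub>C\<^esub> (j \<otimes>\<^bsub>C\<^esub> j')) = K #>\<^bsub>S\<^esub> ((i \<otimes>\<^bsub>C\<^esub> i') \<otimes>\<^bsub>S\<^esub> (j \<otimes>\<^bsub>C\<^esub> j'))"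
        using Y[OF ii jj] by blast
      have y1: "K #>\<^bsub>S\<^esub> (i' \<otimes>\<^bsub>C\<^esub> j) = K #>\<^bsub>S\<^esub> (j \<otimes>\<^bsub>C\<^esub> i')" using Y[OF i' j] by blast
      have y3a: "K #>\<^bsub>S\<^esub> (i \<otimes>\<^bsub>C\<^esub> j) = K #>\<^bsub>S\<^esub> (i \<otimes>\<^bsub>S\<^esub> j)" using Y[OF i j] by blast
      have y3b: "K #>\<^bsub>S\<^esub> (i' \<otimes>\<^bsub>C\<^esub> j') = K #>\<^bsub>S\<^esub> (i' \<otimes>\<^bsub>S\<^esub> j')" using Y[OF i' j'] by blast
      have c1: "K #>\<^bsub>S\<^esub> ((i' \<otimes>\<^bsub>C\<^esub> j) \<otimes>\<^bsub>C\<^esub> j') = K #>\<^bsub>S\<^esub> ((j \<otimes>\<^bsub>C\<^esub> i') \<otimes>\<^bsub>C\<^esub> j')"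
        by (rule cC[OF K Cm_closed[OF i'c jc] j'c Cm_closed[OF jc i'c] j'c y1 refl])
      have c2: "K #>\<^bsub>S\<^esub> (i \<otimes>\<^bsub>C\<^esub> ((i' \<otimes>\<^bsub>C\<^esub> j) \<otimes>\<^bsub>C\<^esub> j')) = K #>\<^bsub>S\<^esub> (i \<otimes>\<^bsub>C\<^esub> ((j \<otimes>\<^bsub>C\<^esub> i') \<otimes>\<^bsub>C\<^esub> j'))"
        by (rule cC[OF K ic Cm_closed[OF Cm_closed[OF i'c jc] j'c] ic Cm_closed[OF Cm_closed[OF jc i'c] j'c] refl c1])
      have c3: "K #>\<^bsub>S\<^esub> ((i \<otimes>\<^bsub>C\<^esub> j) \<otimes>\<^bsub>C\<^esub> (i' \<otimes>\<^bsub>C\<^esub> j')) = K #>\<^bsub>S\<^esub> ((i \<otimes>\<^bsub>S\<^esub> j) \<otimes>\<^bsub>C\<^esub> (i' \<otimes>\<^bsub>S\<^esub> j'))"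
        by (rule cC[OF K Cm_closed[OF ic jc] Cm_closed[OF i'c j'c] S.m_closed[OF ic jc] S.m_closed[OF i'c j'c] y3a y3b])
      have a1: "(i \<otimes>\<^bsub>C\<^esub> i') \<otimes>\<^bsub>C\<^esub> (j \<otimes>\<^bsub>C\<^esub> j') = i \<otimes>\<^bsub>C\<^esub> ((i' \<otimes>\<^bsub>C\<^esub> j) \<otimes>\<^bsub>C\<^esub> j')"
        using ic jc i'c j'c carr by (simp add: C.m_assoc)
      have a2: "i \<otimes>\<^bsub>C\<^esub> ((j \<otimes>\<^bsub>C\<^esub> i') \<otimes>\<^bsub>C\<^esub> j') = (i \<otimes>\<^bsub>C\<^esub> j) \<otimes>\<^bsub>C\<^esub> (i' \<otimes>\<^bsub>C\<^esub> j')"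
        using ic jc i'c j'c carr by (simp add: C.m_assoc)
      show "K #>\<^bsub>S\<^esub> ((i \<otimes>\<^bsub>C\<^esub> i') \<otimes>\<^bsub>S\<^esub> (j \<otimes>\<^bsub>C\<^esub> j')) = K #>\<^bsub>S\<^esub> ((i \<otimes>\<^bsub>S\<^esub> j) \<otimes>\<^bsub>C\<^esub> (i' \<otimes>\<^bsub>S\<^esub> j'))"
        using y3 a1 c2 a2 c3 by metis
    qed
  qed
qed

end

theorem proposition2p5:
  fixes S C :: "'a monoid" and I J :: "'a set"
  assumes "skew_brace S C"
    and "brace_ideal S C I"
    and "brace_ideal S C J"
  shows "huq_commutator S C I J =
    brace_ideal_generated S C
      ({i \<otimes>\<^bsub>C\<^esub> j \<otimes>\<^bsub>C\<^esub> inv\<^bsub>C\<^esub> (j \<otimes>\<^bsub>C\<^esub> i) | i j. i \<in> I \<and> j \<in> J} \<union>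
       {i \<otimes>\<^bsub>S\<^esub> j \<otimes>\<^bsub>S\<^esub> inv\<^bsub>S\<^esub> (j \<otimes>\<^bsub>S\<^esub> i) | i j. i \<in> I \<and> j \<in> J} \<union>
       {(i \<otimes>\<^bsub>C\<^esub> j) \<otimes>\<^bsub>S\<^esub> inv\<^bsub>S\<^esub> (i \<otimes>\<^bsub>S\<^esub> j) | i j. i \<in> I \<and> j \<in> J})"
    (is "_ = brace_ideal_generated S C ?Y")
proof -
  interpret sbr S C using assms(1) unfolding skew_brace_def sbr_def sbr_axioms_def by auto
  define K0 where "K0 = brace_ideal_generated S C ?Y"
  have Ic: "I \<subseteq> carrier S" and Jc: "J \<subseteq> carrier S" using assms by (auto simp: brace_ideal_def)
  have Ycar: "?Y \<subseteq> carrier S" using Ic Jc by (auto intro!: S.m_closed Cm_closed Cinv_closed S.inv_closed)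
  have fam: "carrier S \<in> {L. brace_ideal S C L \<and> ?Y \<subseteq> L}" using ideal_carrier Ycar by blast
  have K0i: "brace_ideal S C K0" unfolding K0_def brace_ideal_generated_def
    by (rule ideal_Inter) (use fam in auto)
  have YK0: "?Y \<subseteq> K0" unfolding K0_def brace_ideal_generated_def by blast
  let ?P = "\<lambda>K. brace_ideal S C K \<and> huq_condition S C I J K \<and>
      (\<forall>K'. brace_ideal S C K' \<and> huq_condition S C I J K' \<longrightarrow> K \<subseteq> K')"
  have P0: "?P K0"
  proof (intro conjI allI impI)
    show "brace_ideal S C K0" by fact
    show "huq_condition S C I J K0" using huq_iff[OF K0i assms(2,3)] YK0 by blast
    fix K' assume "brace_ideal S C K' \<and> huq_condition S C I J K'"
    then have "brace_ideal S C K'" "?Y \<subseteq> K'" using huq_iff assms(2,3) by blast+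
    then show "K0 \<subseteq> K'" unfolding K0_def brace_ideal_generated_def by blast
  qed
  have "(THE K. ?P K) = K0"
  proof (rule the_equality)
    show "?P K0" by fact
    fix K assume PK: "?P K"
    then have "K \<subseteq> K0" using P0 by blast
    moreover have "K0 \<subseteq> K" using P0 PK by blast
    ultimately show "K = K0" by blast
  qed
  then show ?thesis unfolding huq_commutator_def K0_def .
qed

end
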